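(* Let $p_1,p_2$ be primes with $p_1\equiv 1 \pmod 4$ and $p_2\equiv 3\pmod 4$, let $m,n$ be positive integers, and let $N=p_1^mp_2^n$. Let $p$ be a prime such that $\mathrm{ord}_{p_1^m}(p)=\phi(p_1^m)$, $\mathrm{ord}_{p_2^n}(p)=\phi(p_2^n)$ and $f:=\mathrm{ord}_N(p)=\phi(N)/2$, where $\phi$ is Euler's totient function. Let $q=p^f$, let $\gamma$ be a primitive element of $\mathbb{F}_q$, and let $C_i=\gamma^i\langle\gamma^N\rangle$ for $0\le i\le N-1$ (indices read modulo $N$). Define $$D=\bigcup_{i=0}^{p_1^{m-1}-1}\ \bigcup_{j=0}^{p_2^{n-1}-1} C_{p_2^n i+p_1^m j}\subseteq \mathbb{F}_q .$$ Then the set $\{\psi(\gamma^a D)\,:\, a=0,1,\dots,q-2\}$ has at most five elements, where $\psi(\gamma^aD)=\sum_{x\in D}\psi(\gamma^a x)$.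
   Context: $\psi$ denotes the canonical additive character of $\mathbb{F}_q$, $\psi(x)=\exp\!\big(2\pi i\,\mathrm{Tr}_{q/p}(x)/p\big)$, where $\mathrm{Tr}_{q/p}$ is the absolute trace from $\mathbb{F}_q$ to $\mathbb{F}_p$. $\mathrm{ord}_M(p)$ is the multiplicative order of $p$ modulo $M$. The sets $C_i$ are the cyclotomic classes of order $N$ of $\mathbb{F}_q$. *)

theory Defs
  imports Complex_Main "HOL-Number_Theory.Number_Theory"
begin

definition abs_trace :: "nat \<Rightarrow> nat \<Rightarrow> 'a::field \<Rightarrow> 'a" where
  "abs_trace p f x = (\<Sum>k<f. x ^ (p ^ k))"

text \<open>Canonical additive character psi(x) = exp(2 pi i Tr(x)/p), where Tr(x), an element
  of the prime field, is identified with the unique k < p such that of_nat k = Tr(x).\<close>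
definition can_add_char :: "nat \<Rightarrow> nat \<Rightarrow> 'a::field \<Rightarrow> complex" where
  "can_add_char p f x =
     cis (2 * pi * real (THE k. k < p \<and> of_nat k = abs_trace p f x) / real p)"

definition primitive_element :: "'a::field \<Rightarrow> bool" where
  "primitive_element g \<longleftrightarrow> g \<noteq> 0 \<and> (\<forall>x. x \<noteq> 0 \<longrightarrow> (\<exists>k::nat. x = g ^ k))"

definition cyc_class :: "'a::field \<Rightarrow> nat \<Rightarrow> nat \<Rightarrow> 'a set" where
  "cyc_class g N i = {g ^ i * (g ^ N) ^ k | k::nat. True}"

end

theory Submission
  imports Defs
begin


lemma lift1:
  fixes y :: int and Q :: nat
  assumes "[y = 1] (mod int Q ^ s)" "s \<ge> 1"
  shows "[y ^ Q = 1] (mod int Q ^ Suc s)"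
proof -
  have e: "y^Q - 1 = (y - 1) * (\<Sum>i<Q. y^i)" by (simp add: power_diff_1_eq)
  have d1: "int Q ^ s dvd y - 1" using assms(1) by (simp add: cong_iff_dvd_diff)
  have yq: "[y = 1] (mod int Q)"
    using assms by (intro cong_dvd_modulus[OF assms(1)]) (simp add: dvd_power)
  have "[(\<Sum>i<Q. y^i) = (\<Sum>i<Q. 1)] (mod int Q)"
    by (rule cong_sum) (metis yq cong_pow power_one)
  hence "int Q dvd (\<Sum>i<Q. y^i) - int Q" by (simp add: cong_iff_dvd_diff)
  hence d2: "int Q dvd (\<Sum>i<Q. y^i)"
    using dvd_add[of "int Q" "(\<Sum>i<Q. y^i) - int Q" "int Q"] by simp
  have "int Q ^ s * int Q dvd (y - 1) * (\<Sum>i<Q. y^i)" using d1 d2 by (rule mult_dvd_mono)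
  thus ?thesis using e by (simp add: cong_iff_dvd_diff mult.commute)
qed

lemma liftpow:
  fixes w q :: nat
  assumes "[w = 1] (mod q)"
  shows "[w ^ (q ^ j) = 1] (mod q ^ Suc j)"
proof -
  have "[int w ^ (q ^ j) = 1] (mod int q ^ Suc j)"
  proof (induction j)
    case 0 then show ?case using assms by (simp add: cong_int_iff[symmetric])
  next
    case (Suc j)
    have "[(int w ^ (q ^ j)) ^ q = 1] (mod int q ^ Suc (Suc j))"
      by (rule lift1) (use Suc in auto)
    thus ?case by (simp add: power_mult[symmetric] mult.commute)
  qed
  thus ?thesis by (metis cong_int_iff of_nat_1 of_nat_power)
qed

lemma crt_gen:
  fixes a b :: nat and X Y :: int
  assumes "a > 0" "b > 0" "int (gcd a b) dvd X - Y"
  shows "\<exists>k::nat. [int k = X] (mod int a) \<and> [int k = Y] (mod int b)"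
proof -
  obtain d where d: "X - Y = int (gcd a b) * d" using assms(3) by (auto elim: dvdE)
  obtain s t where st: "int (gcd a b) = s * int a + t * int b"
    using bezout_int[of "int a" "int b"] by (metis gcd_int_int_eq)
  define k0 where "k0 = X - d * s * int a"
  have k0b: "k0 = Y + d * t * int b" unfolding k0_def using d st by (simp add: algebra_simps)
  define k where "k = k0 mod (int a * int b)"
  have kpos: "k \<ge> 0" unfolding k_def using assms by simp
  have "[k = k0] (mod int a * int b)" unfolding k_def by simp
  hence c1: "[k = k0] (mod int a)" and c2: "[k = k0] (mod int b)"
    by (auto intro: cong_dvd_modulus)
  have "[k0 = X] (mod int a)" unfolding k0_def
    by (simp add: cong_iff_dvd_diff)
  moreover have "[k0 = Y] (mod int b)" unfolding k0b
    by (simp add: cong_iff_dvd_diff)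
  ultimately show ?thesis using c1 c2 kpos
    by (intro exI[of _ "nat k"]) (auto intro: cong_trans)
qed



lemma cong_cancel_mod_mult:
  fixes k a b m :: nat
  assumes "k > 0" "[k*a = k*b] (mod k*m)"
  shows "[a = b] (mod m)"
  using assms by (simp add: cong_def mod_mult_mult1)

lemma valuation_lemma:
  fixes q x x' r :: nat
  assumes q: "prime q" and r: "r \<ge> 1" and c: "[x = x'] (mod q^r)" and nd: "\<not> q^r dvd x"
  shows "\<exists>w. [w = 1] (mod q) \<and> [w * x = x'] (mod q^Suc r)"
proof -
  have x0: "x \<noteq> 0" proof assume "x = 0" with nd show False by simp qed
  have nu: "\<not> is_unit q" using q by auto
  define v where "v = multiplicity q x"
  have vd: "q^v dvd x" unfolding v_def by (rule multiplicity_dvd)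
  have vr: "v < r"
  proof (rule ccontr)
    assume "\<not> v < r" hence "q^r dvd q^v" by (simp add: le_imp_power_dvd)
    with vd nd show False using dvd_trans by blast
  qed
  define u where "u = x div q^v"
  have xu: "x = q^v * u" unfolding u_def using vd by simp
  have nqu: "\<not> q dvd u" unfolding u_def v_def using multiplicity_decompose[of x q] x0 nu by auto
  have "q^v dvd q^r" using vr by (simp add: le_imp_power_dvd)
  hence "[x = x'] (mod q^v)" by (rule cong_dvd_modulus_nat[OF c])
  hence vd': "q^v dvd x'" using vd by (simp add: cong_dvd_iff)
  define u' where "u' = x' div q^v"
  have xu': "x' = q^v * u'" unfolding u'_def using vd' by simp
  have qr: "q^r = q^v * q^(r-v)" using vr by (simp add: power_add[symmetric])
  have "[q^v * u = q^v * u'] (mod q^v * q^(r-v))" using c xu xu' qr by simp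
  hence "[u = u'] (mod q^(r-v))" by (rule cong_cancel_mod_mult[rotated]) (use q in \<open>simp add: prime_gt_0_nat\<close>)
  hence uu': "[u = u'] (mod q)" by (rule cong_dvd_modulus_nat) (use vr in simp)
  have "coprime u q" using prime_imp_coprime[OF q nqu] by (simp add: ac_simps)
  hence cu: "coprime u (q ^ Suc r)" by simp
  obtain s where s: "[u * s = 1] (mod q^Suc r)" using cong_solve_coprime_nat[OF cu] by auto
  define w where "w = u' * s"
  have s1: "[u * s = 1] (mod q)" using s by (rule cong_dvd_modulus_nat) simp
  have "[u' * s = u * s] (mod q)" using uu' by (intro cong_scalar_right) (rule cong_sym)
  hence w1: "[w = 1] (mod q)" unfolding w_def using s1 by (rule cong_trans)
  have "w * x = q^v * u' * (u * s)" unfolding w_def xu by (simp add: ac_simps)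
  moreover have "[q^v * u' * (u * s) = q^v * u' * 1] (mod q^Suc r)"
    using s by (rule cong_scalar_left)
  ultimately have "[w * x = x'] (mod q^Suc r)" using xu' by simp
  thus ?thesis using w1 by blast
qed

lemma cong1_coprime: fixes w q :: nat assumes "[w = 1] (mod q)" shows "coprime w q"
proof -
  have "gcd w q = gcd 1 q" by (rule cong_gcd_eq[OF assms])
  hence "gcd w q = 1" by simp
  thus ?thesis unfolding coprime_iff_gcd_eq_1 .
qed

locale twocomp =
  fixes p q1 m1 q2 m2 :: nat and H :: "nat \<Rightarrow> nat \<Rightarrow> complex"
  assumes q1: "prime q1" and q2: "prime q2" and odd1: "odd q1" and odd2: "odd q2"
    and m1: "m1 > 0" and m2: "m2 > 0"
    and ord1: "ord (q1^m1) p = totient (q1^m1)" and ord2: "ord (q2^m2) p = totient (q2^m2)"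
    and g2: "gcd (totient (q1^m1)) (totient (q2^m2)) dvd 2"
    and Hp: "\<And>k x y. H (p^k*x) (p^k*y) = H x y"
    and Hc: "\<And>x x' y y'. [x=x'] (mod q1^m1) \<Longrightarrow> [y=y'] (mod q2^m2) \<Longrightarrow> H x y = H x' y'"
begin

lemma q1pos[simp]: "0 < q1" using prime_gt_0_nat[OF q1] .
lemma q2pos[simp]: "0 < q2" using prime_gt_0_nat[OF q2] .
lemma M1gt1: "q1^m1 > 1" by (rule one_less_power[OF prime_gt_1_nat[OF q1] m1])
lemma M2gt1: "q2^m2 > 1" by (rule one_less_power[OF prime_gt_1_nat[OF q2] m2])

lemma cop1: "coprime (q1^m1) p"
proof -
  have "totient (q1^m1) \<noteq> 0" using M1gt1 by simp
  hence "ord (q1^m1) p \<noteq> 0" using ord1 by simp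
  thus ?thesis using ord_eq_0[of "q1^m1" p] by simp
qed
lemma cop2: "coprime (q2^m2) p"
proof -
  have "totient (q2^m2) \<noteq> 0" using M2gt1 by simp
  hence "ord (q2^m2) p \<noteq> 0" using ord2 by simp
  thus ?thesis using ord_eq_0[of "q2^m2" p] by simp
qed
lemma copq1: "coprime p q1" using cop1 m1 by (simp add: coprime_commute)

lemma exp1: "[p^e = p^e'] (mod q1^m1) \<longleftrightarrow> [e = e'] (mod totient (q1^m1))"
  using order_divides_expdiff[OF cop1] ord1 by simp
lemma exp2: "[p^e = p^e'] (mod q2^m2) \<longleftrightarrow> [e = e'] (mod totient (q2^m2))"
  using order_divides_expdiff[OF cop2] ord2 by simp

lemma prim1:
  assumes "coprime w (q1^m1)"
  shows "\<exists>x. [p^x = w] (mod q1^m1)"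
proof -
  have rp: "residue_primroot (q1^m1) p" using cop1 ord1 M1gt1 by (simp add: residue_primroot_def)
  have b: "bij_betw (\<lambda>i. p ^ i mod (q1^m1)) {..<totient (q1^m1)} (totatives (q1^m1))"
    by (rule residue_primroot_is_generator[OF M1gt1 rp])
  have "w mod q1^m1 \<noteq> 0"
  proof
    assume "w mod q1^m1 = 0" hence "q1^m1 dvd w" by auto
    hence "is_unit (q1^m1)" by (rule coprime_common_divisor[OF assms _ dvd_refl])
    with M1gt1 show False by auto
  qed
  moreover have "coprime (w mod q1^m1) (q1^m1)"
  proof -
    have nz: "q1^m1 \<noteq> 0" by simp
    show ?thesis by (simp only: coprime_mod_left_iff[OF nz] assms)
  qed
  ultimately have "w mod q1^m1 \<in> totatives (q1^m1)" using M1gt1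
    by (simp add: in_totatives_iff less_imp_le)
  hence "w mod q1^m1 \<in> (\<lambda>i. p ^ i mod (q1^m1)) ` {..<totient (q1^m1)}"
    using b unfolding bij_betw_def by simp
  then obtain i where "p ^ i mod q1^m1 = w mod q1^m1" by (auto simp del: totient_gt_0_iff)
  thus ?thesis by (auto simp: cong_def)
qed

lemma phi1: "totient (q1^m1) = q1^(m1-1) * (q1 - 1)"
  using totient_prime_power[OF q1 m1] .

lemma M1eq: "q1^m1 = q1^(m1-1) * q1"
  using m1 by (cases m1) auto

lemma X1:
  assumes "[x = x'] (mod q1^(m1-1))" "\<not> q1^(m1-1) dvd x"
  shows "H x y = H x' y"
proof -
  have r: "m1 - 1 \<ge> 1" using assms(2) by (cases "m1 - 1") auto
  obtain w where w1: "[w = 1] (mod q1)" and wx: "[w * x = x'] (mod q1^Suc (m1-1))"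
    using valuation_lemma[OF q1 r assms] by blast
  have sm: "Suc (m1 - 1) = m1" using m1 by simp
  have "coprime w q1" using w1 by (rule cong1_coprime)
  hence "coprime w (q1^m1)" by simp
  then obtain e where e: "[p^e = w] (mod q1^m1)" using prim1 by blast
  have "[w ^ (q1^(m1-1)) = 1] (mod q1^m1)" using liftpow[OF w1, of "m1-1"] sm by simp
  moreover have "[(p^e) ^ (q1^(m1-1)) = w ^ (q1^(m1-1))] (mod q1^m1)" using e by (rule cong_pow)
  ultimately have "[(p^e) ^ (q1^(m1-1)) = 1] (mod q1^m1)"
    by (rule cong_trans[rotated])
  hence "[p^(e * q1^(m1-1)) = p^0] (mod q1^m1)"
    by (simp add: power_mult)
  hence "[e * q1^(m1-1) = 0] (mod totient (q1^m1))" using exp1 by blast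
  hence "q1^(m1-1) * (q1 - 1) dvd q1^(m1-1) * e" by (simp add: cong_0_iff phi1 mult.commute)
  hence "(q1 - 1) dvd e" using q1 by (simp add: prime_gt_0_nat)
  moreover have "even (q1 - 1)" using odd1 by simp
  ultimately have ev: "even e" using dvd_trans by blast
  have "int (gcd (totient (q1^m1)) (totient (q2^m2))) dvd int e - 0"
  proof -
    have "gcd (totient (q1^m1)) (totient (q2^m2)) dvd e" using dvd_trans[OF g2] ev by blast
    thus ?thesis by simp
  qed
  then obtain k where k1: "[int k = int e] (mod int (totient (q1^m1)))"
     and k2: "[int k = 0] (mod int (totient (q2^m2)))"
    using crt_gen[of "totient (q1^m1)" "totient (q2^m2)" "int e" 0] M1gt1 M2gt1 by auto
  have "[k = e] (mod totient (q1^m1))" using k1 by (simp add: cong_int_iff)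
  hence "[p^k = p^e] (mod q1^m1)" using exp1 by blast
  hence "[p^k = w] (mod q1^m1)" using e by (rule cong_trans)
  hence "[p^k * x = w * x] (mod q1^m1)" by (rule cong_scalar_right)
  moreover have "[w * x = x'] (mod q1^m1)" using wx sm by simp
  ultimately have c1: "[p^k * x = x'] (mod q1^m1)" by (rule cong_trans)
  have "[k = 0] (mod totient (q2^m2))" using k2 cong_int_iff[of k 0] by simp
  hence "[p^k = p^0] (mod q2^m2)" using exp2 by blast
  hence "[p^k * y = 1 * y] (mod q2^m2)" by (intro cong_scalar_right) simp
  hence c2: "[p^k * y = y] (mod q2^m2)" by simp
  have "H x y = H (p^k*x) (p^k*y)" by (rule Hp[symmetric])
  also have "\<dots> = H x' y" by (rule Hc[OF c1 c2])
  finally show ?thesis .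
qed

end


lemma perm_lemma:
  fixes g :: "nat \<Rightarrow> nat" and L :: nat
  assumes inj: "\<And>r r'. r \<in> A \<Longrightarrow> r' \<in> A \<Longrightarrow> [g r = g r'] (mod L) \<Longrightarrow> r = r'"
    and img: "\<And>r. r \<in> A \<Longrightarrow> g r mod L \<in> B"
    and fin: "finite B" and card: "card A = card B"
  shows "(\<lambda>r. g r mod L) ` A = B"
proof -
  have i: "inj_on (\<lambda>r. g r mod L) A" using inj by (auto simp: inj_on_def cong_def)
  show ?thesis
  proof (rule card_subset_eq[OF fin])
    show "(\<lambda>r. g r mod L) ` A \<subseteq> B" using img by auto
    show "card ((\<lambda>r. g r mod L) ` A) = card B" using card_image[OF i] card by simp
  qed
qed

context twocomp
begin

lemma copL1: "coprime p (q1^(m1-1))" using copq1 by simp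

lemma U1:
  assumes "q1^(m1-1) dvd z" "q1^(m1-1) dvd z'" "\<not> q1^m1 dvd z" "\<not> q1^m1 dvd z'"
  shows "\<exists>k. [p^k * z = z'] (mod q1^m1)"
proof -
  obtain e where e: "z = q1^(m1-1) * e" using assms(1) by (auto elim: dvdE)
  obtain e' where e': "z' = q1^(m1-1) * e'" using assms(2) by (auto elim: dvdE)
  have ne: "\<not> q1 dvd e"
  proof
    assume "q1 dvd e" hence "q1^(m1-1) * q1 dvd z" using e by simp
    thus False using assms(3) M1eq by simp
  qed
  have ne': "\<not> q1 dvd e'"
  proof
    assume "q1 dvd e'" hence "q1^(m1-1) * q1 dvd z'" using e' by simp
    thus False using assms(4) M1eq by simp
  qed
  have ce: "coprime e (q1^m1)" using prime_imp_coprime[OF q1 ne] by (simp add: ac_simps)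
  have ce': "coprime e' (q1^m1)" using prime_imp_coprime[OF q1 ne'] by (simp add: ac_simps)
  obtain s where s: "[e * s = 1] (mod q1^m1)" using cong_solve_coprime_nat[OF ce] by auto
  have "gcd (e * s) (q1^m1) = gcd 1 (q1^m1)" by (rule cong_gcd_eq[OF s])
  hence "coprime (e * s) (q1^m1)" unfolding coprime_iff_gcd_eq_1 by simp
  hence cs: "coprime s (q1^m1)" by auto
  have cw: "coprime (e' * s) (q1^m1)" using ce' cs by auto
  obtain k where k: "[p^k = e' * s] (mod q1^m1)" using prim1[OF cw] by blast
  have "[p^k * e = (e' * s) * e] (mod q1^m1)" using k by (rule cong_scalar_right)
  moreover have "(e' * s) * e = e' * (e * s)" by (simp add: ac_simps)
  ultimately have c1: "[p^k * e = e' * (e * s)] (mod q1^m1)" by simp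
  have "[e' * (e * s) = e' * 1] (mod q1^m1)" by (rule cong_scalar_left[OF s])
  with c1 have "[p^k * e = e' * 1] (mod q1^m1)" by (rule cong_trans)
  hence "[p^k * e = e'] (mod q1^m1)" by simp
  hence "[q1^(m1-1) * (p^k * e) = q1^(m1-1) * e'] (mod q1^m1)" by (rule cong_scalar_left)
  hence "[p^k * z = z'] (mod q1^m1)" using e e' by (simp add: ac_simps)
  thus ?thesis by blast
qed

lemma sumperm1:
  "(\<Sum>r\<in>{1..<q1^(m1-1)}. H (p^k * r) y) = (\<Sum>r\<in>{1..<q1^(m1-1)}. H r y)"
proof -
  let ?L = "q1^(m1-1)"
  have cp: "coprime (p^k) ?L" using copL1 by auto
  have nd: "\<not> ?L dvd p^k * r" if "r \<in> {1..<?L}" for r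
  proof
    assume a: "?L dvd p^k * r"
    have "coprime ?L (p^k)" using cp by (simp only: coprime_commute)
    hence "?L dvd r" using a coprime_dvd_mult_right_iff by blast
    with that show False by (auto dest: dvd_imp_le)
  qed
  have eq1: "H (p^k * r) y = H (p^k * r mod ?L) y" if "r \<in> {1..<?L}" for r
    by (rule X1) (use nd[OF that] in auto)
  have img: "(\<lambda>r. p^k * r mod ?L) ` {1..<?L} = {1..<?L}"
  proof (rule perm_lemma)
    fix r r' assume r: "r \<in> {1..<?L}" "r' \<in> {1..<?L}" and c: "[p^k * r = p^k * r'] (mod ?L)"
    have "[r = r'] (mod ?L)" using c cp by (simp add: cong_mult_lcancel_nat)
    thus "r = r'" using r by (simp add: cong_def)
  next
    fix r assume r: "r \<in> {1..<?L}"
    have m0: "p^k * r mod ?L \<noteq> 0"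
    proof
      assume "p^k * r mod ?L = 0" hence "?L dvd p^k * r" by (rule mod_0_imp_dvd)
      with nd[OF r] show False by contradiction
    qed
    have lt: "p^k * r mod ?L < ?L" by simp
    have pos: "0 < p^k * r mod ?L" using m0 by (simp only: neq0_conv)
    show "p^k * r mod ?L \<in> {1..<?L}" unfolding atLeastLessThan_iff using pos lt by (intro conjI) linarith+
  qed auto
  have inj: "inj_on (\<lambda>r. p^k * r mod ?L) {1..<?L}"
  proof (rule eq_card_imp_inj_on)
    show "finite {1..<?L}" by simp
    show "card ((\<lambda>r. p^k * r mod ?L) ` {1..<?L}) = card {1..<?L}" by (simp only: img)
  qed
  have "(\<Sum>r\<in>{1..<?L}. H (p^k * r) y) = (\<Sum>r\<in>{1..<?L}. H (p^k * r mod ?L) y)"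
    using eq1 by (rule sum.cong[OF refl])
  also have "\<dots> = (\<Sum>r\<in>(\<lambda>r. p^k * r mod ?L) ` {1..<?L}. H r y)"
    using sum.reindex[OF inj, of "\<lambda>r. H r y"] by (simp only: comp_def)
  also have "\<dots> = (\<Sum>r\<in>{1..<?L}. H r y)" by (simp only: img)
  finally show ?thesis .
qed

lemma exists_i0:
  assumes "coprime K q1"
  shows "\<exists>i0<q1^(m1-1). q1^(m1-1) dvd (a + K*i0)"
proof -
  let ?L = "q1^(m1-1)"
  have cK: "coprime K ?L" using assms by simp
  obtain s where s: "[K * s = 1] (mod ?L)" using cong_solve_coprime_nat[OF cK] by auto
  define t where "t = ?L - a mod ?L"
  define i0 where "i0 = (t * s) mod ?L"
  have "[K * i0 = K * (t * s)] (mod ?L)" unfolding i0_def by (simp add: cong_def mod_mult_right_eq)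
  moreover have "[K * (t * s) = t * (K * s)] (mod ?L)" by (simp add: ac_simps)
  moreover have "[t * (K * s) = t * 1] (mod ?L)" using s by (rule cong_scalar_left)
  ultimately have "[K * i0 = t] (mod ?L)" by (metis cong_trans mult_1_right)
  hence "[a + K * i0 = a mod ?L + t] (mod ?L)" by (intro cong_add) (simp_all add: cong_def)
  moreover have "a mod ?L + t = ?L" unfolding t_def by simp
  ultimately have "[a + K * i0 = 0] (mod ?L)" by (simp add: cong_def)
  moreover have "i0 < ?L" unfolding i0_def by simp
  ultimately show ?thesis by (auto simp: cong_0_iff)
qed

lemma split1:
  assumes cK: "coprime K q1" and i0: "i0 < q1^(m1-1)" and d: "q1^(m1-1) dvd (a + K*i0)"
  shows "(\<Sum>i<q1^(m1-1). H (a + K*i) y) = H (a + K*i0) y + (\<Sum>r\<in>{1..<q1^(m1-1)}. H r y)"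
proof -
  let ?L = "q1^(m1-1)"
  have cKL: "coprime K ?L" using cK by simp
  have cong_i: "i = i'" if "i < ?L" "i' < ?L" "[a + K*i = a + K*i'] (mod ?L)" for i i'
  proof -
    have "[K*i = K*i'] (mod ?L)" using that(3) by (simp add: cong_add_lcancel_nat)
    hence "[i = i'] (mod ?L)" using cKL by (simp add: cong_mult_lcancel_nat)
    thus ?thesis using that by (simp add: cong_def)
  qed
  have nd: "\<not> ?L dvd (a + K*i)" if "i \<in> {..<?L} - {i0}" for i
  proof
    assume "?L dvd (a + K*i)"
    hence "[a + K*i = a + K*i0] (mod ?L)" using d by (simp add: cong_def dvd_eq_mod_eq_0)
    hence "i = i0" using cong_i that i0 by auto
    with that show False by simp
  qed
  have eq1: "H (a + K*i) y = H ((a + K*i) mod ?L) y" if "i \<in> {..<?L} - {i0}" for i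
    by (rule X1) (use nd[OF that] in auto)
  have card: "card ({..<?L} - {i0}) = card {1..<?L}" using i0 by simp
  have img: "(\<lambda>i. (a + K*i) mod ?L) ` ({..<?L} - {i0}) = {1..<?L}"
  proof (rule perm_lemma)
    fix r r' assume "r \<in> {..<?L} - {i0}" "r' \<in> {..<?L} - {i0}" "[a + K*r = a + K*r'] (mod ?L)"
    thus "r = r'" using cong_i by auto
  next
    fix r assume r: "r \<in> {..<?L} - {i0}"
    have m0: "(a + K*r) mod ?L \<noteq> 0"
    proof
      assume "(a + K*r) mod ?L = 0" hence "?L dvd (a + K*r)" by (rule mod_0_imp_dvd)
      with nd[OF r] show False by contradiction
    qed
    have lt: "(a + K*r) mod ?L < ?L" by simp
    have pos: "0 < (a + K*r) mod ?L" using m0 by (simp only: neq0_conv)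
    show "(a + K*r) mod ?L \<in> {1..<?L}" unfolding atLeastLessThan_iff using pos lt by (intro conjI) linarith+
  qed (use card in auto)
  have inj: "inj_on (\<lambda>i. (a + K*i) mod ?L) ({..<?L} - {i0})"
  proof (rule eq_card_imp_inj_on)
    show "finite ({..<?L} - {i0})" by simp
    show "card ((\<lambda>i. (a + K*i) mod ?L) ` ({..<?L} - {i0})) = card ({..<?L} - {i0})"
      by (simp only: img card)
  qed
  have "(\<Sum>i<?L. H (a + K*i) y) = H (a + K*i0) y + (\<Sum>i\<in>{..<?L} - {i0}. H (a + K*i) y)"
    using i0 by (simp add: sum.remove)
  also have "(\<Sum>i\<in>{..<?L} - {i0}. H (a + K*i) y) = (\<Sum>i\<in>{..<?L} - {i0}. H ((a + K*i) mod ?L) y)"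
    using eq1 by (rule sum.cong[OF refl])
  also have "\<dots> = (\<Sum>r\<in>(\<lambda>i. (a + K*i) mod ?L) ` ({..<?L} - {i0}). H r y)"
    using sum.reindex[OF inj, of "\<lambda>r. H r y"] by (simp only: comp_def)
  also have "\<dots> = (\<Sum>r\<in>{1..<?L}. H r y)" by (simp only: img)
  finally show ?thesis .
qed

end


locale fsetup =
  fixes p f N :: nat and \<gamma> :: "'a::{finite,field}"
  assumes cardF: "card (UNIV::'a set) = p^f"
    and prim: "primitive_element \<gamma>"
    and pp: "prime p" and fpos: "f > 0"
    and Ndvd: "N dvd p^f - 1" and Npos: "N > 0"
begin

abbreviation "Q \<equiv> p^f - 1"

lemma g0: "\<gamma> \<noteq> 0" using prim unfolding primitive_element_def by simp

lemma card_ge2: "p^f \<ge> 2"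
proof -
  have "{0::'a, 1} \<subseteq> UNIV" by simp
  hence "card {0::'a, 1} \<le> card (UNIV::'a set)" by (rule card_mono[OF finite_UNIV])
  thus ?thesis using cardF by simp
qed

lemma Qpos: "Q > 0" using card_ge2 by simp

lemma cardU: "card (UNIV - {0::'a}) = Q"
  using cardF by (simp add: card_Diff_singleton)

lemma gQ: "\<gamma> ^ Q = 1"
proof -
  let ?U = "UNIV - {0::'a}"
  have inj: "inj_on (\<lambda>x. \<gamma> * x) ?U" using g0 by (auto simp: inj_on_def)
  have sub: "(\<lambda>x. \<gamma> * x) ` ?U \<subseteq> ?U" using g0 by auto
  have img: "(\<lambda>x. \<gamma> * x) ` ?U = ?U" by (rule endo_inj_surj[OF _ sub inj]) simp
  have "prod (\<lambda>x. x) ?U = prod (\<lambda>x. x) ((\<lambda>x. \<gamma> * x) ` ?U)" by (simp only: img)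
  also have "\<dots> = prod (\<lambda>x. \<gamma> * x) ?U" using prod.reindex[OF inj, of "\<lambda>x. x"] by (simp only: comp_def)
  also have "\<dots> = \<gamma> ^ card ?U * prod (\<lambda>x. x) ?U" by (simp add: prod.distrib)
  finally have "prod (\<lambda>x. x) ?U = \<gamma> ^ Q * prod (\<lambda>x. x) ?U" using cardU by simp
  moreover have "prod (\<lambda>x. x) ?U \<noteq> 0" by (simp add: prod_zero_iff)
  ultimately show ?thesis by simp
qed

lemma gpow_mod: "\<gamma> ^ e = \<gamma> ^ (e mod Q)"
proof -
  have "\<gamma> ^ e = \<gamma> ^ (Q * (e div Q) + e mod Q)" by simp
  also have "\<dots> = (\<gamma> ^ Q) ^ (e div Q) * \<gamma> ^ (e mod Q)" by (simp only: power_add power_mult)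
  finally show ?thesis using gQ by simp
qed

lemma gpow_inj: "inj_on (\<lambda>k. \<gamma> ^ k) {..<Q}"
proof (rule eq_card_imp_inj_on)
  show "finite {..<Q}" by simp
  have "(\<lambda>k. \<gamma> ^ k) ` {..<Q} = UNIV - {0}"
  proof
    show "(\<lambda>k. \<gamma> ^ k) ` {..<Q} \<subseteq> UNIV - {0}" using g0 by auto
    show "UNIV - {0} \<subseteq> (\<lambda>k. \<gamma> ^ k) ` {..<Q}"
    proof
      fix x :: 'a assume "x \<in> UNIV - {0}"
      then obtain k where k: "x = \<gamma> ^ k" using prim unfolding primitive_element_def by auto
      hence "x = \<gamma> ^ (k mod Q)" using gpow_mod by simp
      moreover have "k mod Q < Q" using Qpos by simp
      ultimately show "x \<in> (\<lambda>k. \<gamma> ^ k) ` {..<Q}" by auto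
    qed
  qed
  thus "card ((\<lambda>k. \<gamma> ^ k) ` {..<Q}) = card {..<Q}" using cardU by simp
qed

lemma gpow_eq: "\<gamma> ^ e = \<gamma> ^ e' \<longleftrightarrow> [e = e'] (mod Q)"
proof
  assume "\<gamma> ^ e = \<gamma> ^ e'"
  hence "\<gamma> ^ (e mod Q) = \<gamma> ^ (e' mod Q)" by (simp only: gpow_mod[symmetric])
  moreover have "e mod Q \<in> {..<Q}" "e' mod Q \<in> {..<Q}" using Qpos by auto
  ultimately have "e mod Q = e' mod Q" using gpow_inj by (auto dest: inj_onD)
  thus "[e = e'] (mod Q)" by (simp add: cong_def)
next
  assume "[e = e'] (mod Q)"
  hence "e mod Q = e' mod Q" by (simp only: cong_def)
  thus "\<gamma> ^ e = \<gamma> ^ e'" by (simp only: gpow_mod[of e] gpow_mod[of e'])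
qed

lemma frob_id: "(x::'a) ^ (p^f) = x"
proof (cases "x = 0")
  case True thus ?thesis using pp by (simp add: prime_gt_0_nat)
next
  case False
  then obtain k where k: "x = \<gamma> ^ k" using prim unfolding primitive_element_def by auto
  have "[k * p^f = k] (mod Q)"
  proof -
    have h1: "k \<le> k * p^f" using card_ge2 by simp
    have "k * (p^f - 1) = k * p^f - k" by (simp add: diff_mult_distrib2)
    hence "k * p^f = k + k * Q" using h1 by simp
    thus ?thesis by (simp add: cong_def)
  qed
  hence "\<gamma> ^ (k * p^f) = \<gamma> ^ k" using gpow_eq by blast
  thus ?thesis using k by (simp add: power_mult)
qed

lemma trace_frob: fixes x :: 'a shows "abs_trace p f (x ^ p) = abs_trace p f x"
proof -
  let ?g = "\<lambda>k. x ^ (p ^ k)"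
  have "abs_trace p f (x ^ p) = (\<Sum>k<f. ?g (Suc k))"
    unfolding abs_trace_def by (simp add: power_mult[symmetric] mult.commute)
  moreover have "(\<Sum>k<Suc f. ?g k) = ?g 0 + (\<Sum>k<f. ?g (Suc k))" by (rule sum.lessThan_Suc_shift)
  moreover have "(\<Sum>k<Suc f. ?g k) = (\<Sum>k<f. ?g k) + ?g f" by simp
  moreover have "?g f = ?g 0" using frob_id by simp
  ultimately show ?thesis unfolding abs_trace_def by simp
qed

lemma psi_frob: fixes x :: 'a shows "can_add_char p f (x ^ p) = can_add_char p f x"
  unfolding can_add_char_def using trace_frob by simp

lemma frob_inj: "inj_on (\<lambda>x::'a. x ^ p) A"
proof (rule inj_onI)
  fix x y :: 'a assume "x ^ p = y ^ p"
  hence "(x ^ p) ^ (p^(f-1)) = (y ^ p) ^ (p^(f-1))" by simp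
  moreover have "p * p^(f-1) = p^f" using fpos by (simp add: power_eq_if)
  ultimately have "x ^ (p^f) = y ^ (p^f)" by (simp add: power_mult[symmetric])
  thus "x = y" using frob_id by simp
qed

lemma cyc_mem: "x \<in> cyc_class \<gamma> N t \<longleftrightarrow> (\<exists>k. x = \<gamma> ^ (t + N * k))"
proof -
  have e: "\<And>k. \<gamma>^t * (\<gamma>^N)^k = \<gamma>^(t + N*k)" by (simp only: power_add power_mult)
  show ?thesis unfolding cyc_class_def by (simp only: e mem_Collect_eq simp_thms)
qed

lemma cyc_mem2: "x \<in> cyc_class \<gamma> N t \<longleftrightarrow> (\<exists>e. x = \<gamma> ^ e \<and> [e = t] (mod N))"
proof
  assume "x \<in> cyc_class \<gamma> N t"
  then obtain k where xk: "x = \<gamma> ^ (t + N * k)" unfolding cyc_mem by (elim exE)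
  have "[t + N * k = t] (mod N)" by (simp add: cong_def)
  with xk show "\<exists>e. x = \<gamma> ^ e \<and> [e = t] (mod N)" by (intro exI conjI)
next
  assume "\<exists>e. x = \<gamma> ^ e \<and> [e = t] (mod N)"
  then obtain e where e1: "x = \<gamma> ^ e" and e2: "[e = t] (mod N)" by (elim exE conjE)
  define e' where "e' = e + Q * t"
  have "[e' = e] (mod Q)" unfolding e'_def by (simp add: cong_def)
  hence "\<gamma> ^ e' = \<gamma> ^ e" by (rule gpow_eq[THEN iffD2])
  hence x': "x = \<gamma> ^ e'" using e1 by simp
  have "[Q * t = 0] (mod N)" using Ndvd by (simp add: cong_0_iff)
  hence "[e + Q * t = t + 0] (mod N)" using e2 by (rule cong_add[rotated])
  hence c: "[e' = t] (mod N)" unfolding e'_def by simp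
  have "1 * t \<le> Q * t" using Qpos by (intro mult_le_mono1) simp
  hence le: "t \<le> e'" unfolding e'_def by linarith
  have "N dvd e' - t" using c by (rule cong_altdef_nat[OF le, THEN iffD1])
  then obtain k where k: "e' - t = N * k" by (elim dvdE)
  hence "e' = t + N * k" using le by simp
  hence "x = \<gamma> ^ (t + N * k)" using x' by simp
  thus "x \<in> cyc_class \<gamma> N t" unfolding cyc_mem by (rule exI)
qed

lemma cyc_cong:
  assumes c: "[t = t'] (mod N)"
  shows "cyc_class \<gamma> N t = cyc_class \<gamma> N t'"
proof -
  have i: "[e = t] (mod N) \<longleftrightarrow> [e = t'] (mod N)" for e
  proof
    assume "[e = t] (mod N)" thus "[e = t'] (mod N)" using c by (rule cong_trans)
  next
    assume "[e = t'] (mod N)" thus "[e = t] (mod N)" using cong_sym[OF c] by (rule cong_trans)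
  qed
  show ?thesis by (simp only: set_eq_iff cyc_mem2 i simp_thms)
qed

lemma cyc_disj: "\<not> [t = t'] (mod N) \<Longrightarrow> cyc_class \<gamma> N t \<inter> cyc_class \<gamma> N t' = {}"
proof (rule ccontr)
  assume nc: "\<not> [t = t'] (mod N)" and "cyc_class \<gamma> N t \<inter> cyc_class \<gamma> N t' \<noteq> {}"
  then obtain x where "x \<in> cyc_class \<gamma> N t" "x \<in> cyc_class \<gamma> N t'" by blast
  then obtain e e' where ee: "x = \<gamma> ^ e" "[e = t] (mod N)" "x = \<gamma> ^ e'" "[e' = t'] (mod N)"
    unfolding cyc_mem2 by blast
  hence "\<gamma> ^ e = \<gamma> ^ e'" by simp
  hence "[e = e'] (mod Q)" using gpow_eq by blast
  hence eN: "[e = e'] (mod N)" using Ndvd by (rule cong_dvd_modulus_nat)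
  have "[t = t'] (mod N)"
    using cong_trans[OF cong_trans[OF cong_sym[OF ee(2)] eN] ee(4)] .
  with nc show False by contradiction
qed

definition G :: "nat \<Rightarrow> complex" where
  "G t = (\<Sum>x\<in>cyc_class \<gamma> N t. can_add_char p f x)"

lemma G_cong: "[t = t'] (mod N) \<Longrightarrow> G t = G t'"
  unfolding G_def using cyc_cong by simp

lemma shift_class: "(\<lambda>x. \<gamma>^a * x) ` cyc_class \<gamma> N t = cyc_class \<gamma> N (a + t)"
  unfolding cyc_class_def by (auto simp: power_add mult.assoc)

lemma G_shift: "(\<Sum>x\<in>cyc_class \<gamma> N t. can_add_char p f (\<gamma>^a * x)) = G (a + t)"
proof -
  have inj: "inj_on (\<lambda>x. \<gamma>^a * x) (cyc_class \<gamma> N t)" using g0 by (auto simp: inj_on_def)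
  show ?thesis unfolding G_def shift_class[symmetric]
    using sum.reindex[OF inj, of "can_add_char p f"] by (simp only: comp_def)
qed

lemma frob_class: "(\<lambda>x. x ^ p) ` cyc_class \<gamma> N t = cyc_class \<gamma> N (p * t)"
proof
  show "(\<lambda>x. x ^ p) ` cyc_class \<gamma> N t \<subseteq> cyc_class \<gamma> N (p * t)"
  proof
    fix y assume "y \<in> (\<lambda>x. x ^ p) ` cyc_class \<gamma> N t"
    then obtain x where x: "x \<in> cyc_class \<gamma> N t" and y: "y = x ^ p" by blast
    from x obtain k where xk: "x = \<gamma> ^ t * (\<gamma> ^ N) ^ k" unfolding cyc_class_def by blast
    have "y = \<gamma> ^ (p * t) * (\<gamma> ^ N) ^ (k * p)"
      unfolding y xk by (simp add: power_mult_distrib power_mult[symmetric] ac_simps)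
    thus "y \<in> cyc_class \<gamma> N (p * t)" unfolding cyc_class_def by blast
  qed
  show "cyc_class \<gamma> N (p * t) \<subseteq> (\<lambda>x. x ^ p) ` cyc_class \<gamma> N t"
  proof
    fix y assume "y \<in> cyc_class \<gamma> N (p * t)"
    then obtain k where y: "y = \<gamma> ^ (p * t) * (\<gamma> ^ N) ^ k" unfolding cyc_class_def by blast
    define x where "x = \<gamma> ^ t * (\<gamma> ^ N) ^ (k * p^(f-1))"
    have xm: "x \<in> cyc_class \<gamma> N t" unfolding x_def cyc_class_def by blast
    have pp1: "p * p^(f-1) = p^f" using fpos by (simp add: power_eq_if)
    have "x ^ p = \<gamma> ^ (p * t) * ((\<gamma> ^ N) ^ k) ^ (p^f)"
      unfolding x_def by (simp add: power_mult_distrib power_mult[symmetric] pp1[symmetric] ac_simps)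
    also have "\<dots> = y" using y frob_id by simp
    finally show "y \<in> (\<lambda>x. x ^ p) ` cyc_class \<gamma> N t" using xm by blast
  qed
qed

lemma G_frob: "G (p * t) = G t"
proof -
  have "G (p * t) = (\<Sum>y\<in>(\<lambda>x. x ^ p) ` cyc_class \<gamma> N t. can_add_char p f y)"
    unfolding G_def frob_class ..
  also have "\<dots> = (\<Sum>x\<in>cyc_class \<gamma> N t. can_add_char p f (x ^ p))"
    using sum.reindex[OF frob_inj, of "can_add_char p f"] by (simp only: comp_def)
  also have "\<dots> = G t" unfolding G_def psi_frob ..
  finally show ?thesis .
qed

lemma G_frob_pow: "G (p^k * t) = G t"
proof (induction k)
  case 0 thus ?case by simp
next
  case (Suc k)
  have "G (p^Suc k * t) = G (p * (p^k * t))" by (simp add: ac_simps)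
  also have "\<dots> = G (p^k * t)" by (rule G_frob)
  finally show ?case using Suc by simp
qed

end


lemma gcd_cond:
  fixes p N f M1 M2 :: nat
  assumes N: "N = M1 * M2" and cop: "coprime M1 M2"
    and o1: "ord M1 p = totient M1" and o2: "ord M2 p = totient M2"
    and fo: "f = ord N p" and ft: "f = totient N div 2"
    and ev: "even (totient M1)" and fpos: "f > 0"
    and M1: "M1 > 0" and M2: "M2 > 0"
  shows "gcd (totient M1) (totient M2) dvd 2"
proof -
  let ?a = "totient M1" and ?b = "totient M2"
  let ?l = "lcm ?a ?b" and ?g = "gcd ?a ?b"
  have tN: "totient N = ?a * ?b" using N cop by (simp add: totient_mult_coprime)
  have c1: "[p ^ ?l = 1] (mod M1)" by (rule ord_divides[THEN iffD2]) (simp add: o1)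
  have c2: "[p ^ ?l = 1] (mod M2)" by (rule ord_divides[THEN iffD2]) (simp add: o2)
  have "[p ^ ?l = 1] (mod M1 * M2)" by (rule coprime_cong_mult_nat[OF c1 c2 cop])
  hence "ord N p dvd ?l" unfolding N by (rule ord_divides[THEN iffD1])
  hence fd: "f dvd ?l" using fo by simp
  have apos: "?a > 0" and bpos: "?b > 0" using M1 M2 by simp_all
  have lpos: "?l > 0" using apos bpos by (simp add: lcm_pos_nat)
  have fl: "f \<le> ?l" using fd lpos by (rule dvd_imp_le)
  have ab: "?a * ?b = ?g * ?l" by (rule prod_gcd_lcm_nat)
  have "even (?a * ?b)" using ev by simp
  hence f2: "2 * f = ?a * ?b" using ft tN by simp
  have "?g * f \<le> ?g * ?l" using fl by (rule mult_le_mono2)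
  hence "?g * f \<le> 2 * f" using ab f2 by linarith
  hence "?g \<le> 2" using fpos by simp
  moreover have "?g > 0" using apos by simp
  ultimately have "?g = 1 \<or> ?g = 2" by linarith
  thus ?thesis by auto
qed



lemma five_values:
  fixes p q1 m1 q2 m2 :: nat and H :: "nat \<Rightarrow> nat \<Rightarrow> complex"
  assumes TA: "twocomp p q1 m1 q2 m2 H" and TB: "twocomp p q2 m2 q1 m1 (\<lambda>y x. H x y)"
    and cq: "coprime q1 q2"
  shows "\<exists>V1 V2 V3 V4 V5. \<forall>a. (\<Sum>i<q1^(m1-1). \<Sum>j<q2^(m2-1). H (a + q2^m2*i) (a + q1^m1*j))
            \<in> {V1, V2, V3, V4, V5}"
proof -
  interpret A: twocomp p q1 m1 q2 m2 H by (rule TA)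
  interpret B: twocomp p q2 m2 q1 m1 "\<lambda>y x. H x y" by (rule TB)
  let ?L1 = "q1^(m1-1)" and ?L2 = "q2^(m2-1)" and ?M1 = "q1^m1" and ?M2 = "q2^m2"
  define A1 where "A1 z = (\<Sum>s\<in>{1..<?L2}. H z s)" for z
  define A2 where "A2 z = (\<Sum>r\<in>{1..<?L1}. H r z)" for z
  define C where "C = (\<Sum>r\<in>{1..<?L1}. \<Sum>s\<in>{1..<?L2}. H r s)"
  have M1eq: "?M1 = ?L1 * q1" by (rule A.M1eq)
  have M2eq: "?M2 = ?L2 * q2" by (rule B.M1eq)
  have L1pos: "?L1 > 0" and L2pos: "?L2 > 0" by simp_all
  have nML1: "\<not> ?M1 dvd ?L1"
  proof
    assume "?M1 dvd ?L1" hence "?L1 * q1 \<le> ?L1 * 1" using M1eq L1pos by (simp add: dvd_imp_le)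
    thus False using prime_gt_1_nat[OF A.q1] L1pos by simp
  qed
  have nML2: "\<not> ?M2 dvd ?L2"
  proof
    assume "?M2 dvd ?L2" hence "?L2 * q2 \<le> ?L2 * 1" using M2eq L2pos by (simp add: dvd_imp_le)
    thus False using prime_gt_1_nat[OF A.q2] L2pos by simp
  qed
  have A1inv: "A1 z = A1 ?L1" if h1: "?L1 dvd z" and h2: "\<not> ?M1 dvd z" for z
  proof -
    obtain k where k: "[p^k * z = ?L1] (mod ?M1)" using A.U1[OF h1 dvd_refl h2 nML1] by blast
    have "A1 z = (\<Sum>s\<in>{1..<?L2}. H (p^k * z) (p^k * s))" unfolding A1_def by (simp only: A.Hp)
    also have "\<dots> = (\<Sum>s\<in>{1..<?L2}. H ?L1 (p^k * s))"
      by (rule sum.cong[OF refl], rule A.Hc[OF k cong_refl])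
    also have "\<dots> = (\<Sum>s\<in>{1..<?L2}. H ?L1 s)" using B.sumperm1[where k=k and y="?L1"] by simp
    finally show ?thesis unfolding A1_def .
  qed
  have A1div: "A1 z = A1 0" if "?M1 dvd z" for z
  proof -
    have c: "[z = 0] (mod ?M1)" using that by (simp add: cong_0_iff)
    show ?thesis unfolding A1_def by (rule sum.cong[OF refl], rule A.Hc[OF c cong_refl])
  qed
  have A2inv: "A2 z = A2 ?L2" if h1: "?L2 dvd z" and h2: "\<not> ?M2 dvd z" for z
  proof -
    obtain k where k: "[p^k * z = ?L2] (mod ?M2)" using B.U1[OF h1 dvd_refl h2 nML2] by blast
    have "A2 z = (\<Sum>r\<in>{1..<?L1}. H (p^k * r) (p^k * z))" unfolding A2_def by (simp only: A.Hp)
    also have "\<dots> = (\<Sum>r\<in>{1..<?L1}. H (p^k * r) ?L2)"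
      by (rule sum.cong[OF refl], rule A.Hc[OF cong_refl k])
    also have "\<dots> = (\<Sum>r\<in>{1..<?L1}. H r ?L2)" using A.sumperm1[where k=k and y="?L2"] by simp
    finally show ?thesis unfolding A2_def .
  qed
  have A2div: "A2 z = A2 0" if "?M2 dvd z" for z
  proof -
    have c: "[z = 0] (mod ?M2)" using that by (simp add: cong_0_iff)
    show ?thesis unfolding A2_def by (rule sum.cong[OF refl], rule A.Hc[OF cong_refl c])
  qed
  define Val where "Val z1 z2 = H z1 z2 + A1 z1 + A2 z2 + C" for z1 z2
  have decomp: "\<exists>z1 z2. ?L1 dvd z1 \<and> ?L2 dvd z2 \<and>
      (\<Sum>i<?L1. \<Sum>j<?L2. H (a + ?M2*i) (a + ?M1*j)) = Val z1 z2" for a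
  proof -
    have c2: "coprime ?M2 q1" using cq by (simp add: ac_simps)
    have c1: "coprime ?M1 q2" using cq by simp
    obtain i0 where i0: "i0 < ?L1" "?L1 dvd (a + ?M2*i0)" using A.exists_i0[OF c2] by blast
    obtain j0 where j0: "j0 < ?L2" "?L2 dvd (a + ?M1*j0)" using B.exists_i0[OF c1] by blast
    define z1 where "z1 = a + ?M2*i0"
    define z2 where "z2 = a + ?M1*j0"
    have sA: "(\<Sum>i<?L1. H (a + ?M2*i) y) = H z1 y + (\<Sum>r\<in>{1..<?L1}. H r y)" for y
      unfolding z1_def by (rule A.split1[OF c2 i0])
    have sB: "(\<Sum>j<?L2. H x (a + ?M1*j)) = H x z2 + (\<Sum>s\<in>{1..<?L2}. H x s)" for x
      unfolding z2_def using B.split1[OF c1 j0, of x] by simp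
    have "(\<Sum>i<?L1. \<Sum>j<?L2. H (a + ?M2*i) (a + ?M1*j))
        = (\<Sum>j<?L2. \<Sum>i<?L1. H (a + ?M2*i) (a + ?M1*j))" by (rule sum.swap)
    also have "\<dots> = (\<Sum>j<?L2. H z1 (a + ?M1*j) + (\<Sum>r\<in>{1..<?L1}. H r (a + ?M1*j)))"
      by (simp only: sA)
    also have "\<dots> = (\<Sum>j<?L2. H z1 (a + ?M1*j)) + (\<Sum>j<?L2. \<Sum>r\<in>{1..<?L1}. H r (a + ?M1*j))"
      by (rule sum.distrib)
    also have "(\<Sum>j<?L2. \<Sum>r\<in>{1..<?L1}. H r (a + ?M1*j)) = (\<Sum>r\<in>{1..<?L1}. \<Sum>j<?L2. H r (a + ?M1*j))"
      by (rule sum.swap)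
    also have "\<dots> = (\<Sum>r\<in>{1..<?L1}. H r z2 + (\<Sum>s\<in>{1..<?L2}. H r s))" by (simp only: sB)
    also have "\<dots> = A2 z2 + C" unfolding A2_def C_def by (rule sum.distrib)
    also have "(\<Sum>j<?L2. H z1 (a + ?M1*j)) = H z1 z2 + A1 z1" unfolding A1_def by (rule sB)
    finally have "(\<Sum>i<?L1. \<Sum>j<?L2. H (a + ?M2*i) (a + ?M1*j)) = Val z1 z2"
      unfolding Val_def by (simp add: ac_simps)
    moreover have "?L1 dvd z1" "?L2 dvd z2" using i0 j0 unfolding z1_def z2_def by simp_all
    ultimately show ?thesis by blast
  qed
  define V1 where "V1 = Val 0 0"
  define V2 where "V2 = H 0 ?L2 + A1 0 + A2 ?L2 + C"
  define V3 where "V3 = H ?L1 0 + A1 ?L1 + A2 0 + C"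
  define V4 where "V4 = H ?L1 ?L2 + A1 ?L1 + A2 ?L2 + C"
  define V5 where "V5 = H (p * ?L1) ?L2 + A1 ?L1 + A2 ?L2 + C"
  have cls: "Val z1 z2 \<in> {V1, V2, V3, V4, V5}" if d1: "?L1 dvd z1" and d2: "?L2 dvd z2" for z1 z2
  proof (cases "?M1 dvd z1")
    case True
    hence e1: "A1 z1 = A1 0" by (rule A1div)
    have c1: "[z1 = 0] (mod ?M1)" using True by (simp add: cong_0_iff)
    show ?thesis
    proof (cases "?M2 dvd z2")
      case True
      have c2: "[z2 = 0] (mod ?M2)" using True by (simp add: cong_0_iff)
      have "Val z1 z2 = V1" unfolding Val_def V1_def
        using e1 A2div[OF True] A.Hc[OF c1 c2] by simp
      thus ?thesis by simp
    next
      case False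
      obtain k where k: "[p^k * ?L2 = z2] (mod ?M2)" using B.U1[OF dvd_refl d2 nML2 False] by blast
      have "H z1 z2 = H (p^k * 0) (p^k * ?L2)" using A.Hc[OF c1 cong_sym[OF k]] by simp
      also have "\<dots> = H 0 ?L2" by (rule A.Hp)
      finally have "Val z1 z2 = V2" unfolding Val_def V2_def using e1 A2inv[OF d2 False] by simp
      thus ?thesis by simp
    qed
  next
    case nd1: False
    have e1: "A1 z1 = A1 ?L1" by (rule A1inv[OF d1 nd1])
    obtain x where x: "[p^x * ?L1 = z1] (mod ?M1)" using A.U1[OF dvd_refl d1 nML1 nd1] by blast
    show ?thesis
    proof (cases "?M2 dvd z2")
      case True
      have c2: "[z2 = 0] (mod ?M2)" using True by (simp add: cong_0_iff)
      have "H z1 z2 = H (p^x * ?L1) (p^x * 0)" using A.Hc[OF cong_sym[OF x] c2] by simp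
      also have "\<dots> = H ?L1 0" by (rule A.Hp)
      finally have "Val z1 z2 = V3" unfolding Val_def V3_def using e1 A2div[OF True] by simp
      thus ?thesis by simp
    next
      case nd2: False
      have e2: "A2 z2 = A2 ?L2" by (rule A2inv[OF d2 nd2])
      obtain y where y: "[p^y * ?L2 = z2] (mod ?M2)" using B.U1[OF dvd_refl d2 nML2 nd2] by blast
      define c where "c = (x + y) mod 2"
      have cx: "int c = int (x + y) - 2 * int ((x + y) div 2)" unfolding c_def
        by (simp add: of_nat_mod of_nat_div mod_div_mult_eq[symmetric] algebra_simps)
      have "(int c - int x) - (- int y) = 2 * (int y - int ((x + y) div 2))" using cx by simp
      hence "2 dvd (int c - int x) - (- int y)" by simp
      moreover have "int (gcd (totient ?M1) (totient ?M2)) dvd 2"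
      proof -
        have "int (gcd (totient ?M1) (totient ?M2)) dvd int 2" using A.g2 by (simp only: int_dvd_int_iff)
        thus ?thesis by simp
      qed
      ultimately have gd: "int (gcd (totient ?M1) (totient ?M2)) dvd (int c - int x) - (- int y)"
        by (rule dvd_trans[rotated])
      obtain k where k1: "[int k = int c - int x] (mod int (totient ?M1))"
        and k2: "[int k = - int y] (mod int (totient ?M2))"
        using crt_gen[OF _ _ gd] A.M1gt1 A.M2gt1 by auto
      have "[int k + int x = int c - int x + int x] (mod int (totient ?M1))"
        by (rule cong_add[OF k1 cong_refl])
      hence "[int (k + x) = int c] (mod int (totient ?M1))" by simp
      hence "[k + x = c] (mod totient ?M1)" by (simp only: cong_int_iff)
      hence "[p^(k + x) = p^c] (mod ?M1)" using A.exp1 by blast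
      hence "[p^(k + x) * ?L1 = p^c * ?L1] (mod ?M1)" by (rule cong_scalar_right)
      hence cc1: "[p^k * (p^x * ?L1) = p^c * ?L1] (mod ?M1)" by (simp add: power_add ac_simps)
      have "[int k + int y = - int y + int y] (mod int (totient ?M2))"
        by (rule cong_add[OF k2 cong_refl])
      hence "[int (k + y) = int 0] (mod int (totient ?M2))" by simp
      hence "[k + y = 0] (mod totient ?M2)" by (simp only: cong_int_iff)
      hence "[p^(k + y) = p^0] (mod ?M2)" using B.exp1 by blast
      hence "[p^(k + y) * ?L2 = p^0 * ?L2] (mod ?M2)" by (rule cong_scalar_right)
      hence cc2: "[p^k * (p^y * ?L2) = ?L2] (mod ?M2)" by (simp add: power_add ac_simps)
      have "H z1 z2 = H (p^x * ?L1) (p^y * ?L2)" using A.Hc[OF cong_sym[OF x] cong_sym[OF y]] by simp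
      also have "\<dots> = H (p^k * (p^x * ?L1)) (p^k * (p^y * ?L2))" by (rule A.Hp[symmetric])
      also have "\<dots> = H (p^c * ?L1) ?L2" by (rule A.Hc[OF cc1 cc2])
      finally have hz: "H z1 z2 = H (p^c * ?L1) ?L2" .
      have "c = 0 \<or> c = 1" unfolding c_def by auto
      thus ?thesis
      proof
        assume "c = 0"
        hence "Val z1 z2 = V4" unfolding Val_def V4_def using hz e1 e2 by simp
        thus ?thesis by simp
      next
        assume "c = 1"
        hence "Val z1 z2 = V5" unfolding Val_def V5_def using hz e1 e2 by simp
        thus ?thesis by simp
      qed
    qed
  qed
  show ?thesis
  proof (intro exI allI)
    fix a
    obtain z1 z2 where z: "?L1 dvd z1" "?L2 dvd z2"
      and e: "(\<Sum>i<?L1. \<Sum>j<?L2. H (a + ?M2*i) (a + ?M1*j)) = Val z1 z2" using decomp by blast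
    show "(\<Sum>i<?L1. \<Sum>j<?L2. H (a + ?M2*i) (a + ?M1*j)) \<in> {V1, V2, V3, V4, V5}"
      unfolding e by (rule cls[OF z])
  qed
qed



theorem theorem3p2:
  fixes p1 p2 m n p f N :: nat and \<gamma> :: "'a::{finite, field}" and D :: "'a set"
  assumes "prime p1" "prime p2"
    and "p1 mod 4 = 1" "p2 mod 4 = 3"
    and "m > 0" "n > 0"
    and "N = p1 ^ m * p2 ^ n"
    and "prime p"
    and "ord (p1 ^ m) p = totient (p1 ^ m)"
    and "ord (p2 ^ n) p = totient (p2 ^ n)"
    and "f = ord N p" "f = totient N div 2"
    and "card (UNIV :: 'a set) = p ^ f"
    and "primitive_element \<gamma>"
    and "D = (\<Union>i<p1 ^ (m - 1). \<Union>j<p2 ^ (n - 1). cyc_class \<gamma> N (p2 ^ n * i + p1 ^ m * j))"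
  shows "card ((\<lambda>a. \<Sum>x\<in>D. can_add_char p f (\<gamma> ^ a * x)) ` {0..card (UNIV :: 'a set) - 2}) \<le> 5"
proof -
  let ?M1 = "p1^m" and ?M2 = "p2^n" and ?L1 = "p1^(m-1)" and ?L2 = "p2^(n-1)"
  have p12: "p1 \<noteq> p2" using assms(3,4) by auto
  have cq: "coprime p1 p2" by (rule primes_coprime[OF assms(1,2) p12])
  have odd1: "odd p1" using assms(3) by presburger
  have odd2: "odd p2" using assms(4) by presburger
  have cM: "coprime ?M1 ?M2" using cq by simp
  have N: "N = ?M1 * ?M2" by (rule assms(7))
  have M1pos: "?M1 > 0" and M2pos: "?M2 > 0" using assms(1,2) by (simp_all add: prime_gt_0_nat)
  have Npos: "N > 0" using N M1pos M2pos by simp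
  have t1: "totient ?M1 \<noteq> 0" using M1pos by simp
  have t2: "totient ?M2 \<noteq> 0" using M2pos by simp
  have cop1: "coprime ?M1 p"
  proof -
    have "ord ?M1 p \<noteq> 0" using assms(9) t1 by simp
    thus ?thesis using ord_eq_0[of ?M1 p] by simp
  qed
  have cop2: "coprime ?M2 p"
  proof -
    have "ord ?M2 p \<noteq> 0" using assms(10) t2 by simp
    thus ?thesis using ord_eq_0[of ?M2 p] by simp
  qed
  have copN: "coprime N p" unfolding N using cop1 cop2 by simp
  have fpos: "f > 0"
  proof -
    have "ord N p \<noteq> 0" using ord_eq_0[of N p] copN by simp
    thus ?thesis using assms(11) by simp
  qed
  have pfN: "[p^f = 1] (mod N)" by (rule ord_divides[THEN iffD2]) (simp add: assms(11))
  have pf1: "1 \<le> p^f" using prime_gt_0_nat[OF assms(8)] by (simp add: Suc_le_eq)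
  have Ndvd: "N dvd p^f - 1" using cong_altdef_nat[OF pf1] pfN by simp
  have ev: "even (totient ?M1)"
  proof -
    have "totient ?M1 = ?L1 * (p1 - 1)" by (rule totient_prime_power[OF assms(1,5)])
    moreover have "even (p1 - 1)" using odd1 by simp
    ultimately show ?thesis by simp
  qed
  have g2: "gcd (totient ?M1) (totient ?M2) dvd 2"
    by (rule gcd_cond[OF N cM assms(9,10,11,12) ev fpos M1pos M2pos])
  interpret F: fsetup p f N \<gamma>
    using assms(13,14,8) fpos Ndvd Npos by unfold_locales
  define c where "c x1 x2 = (SOME x. [x = x1] (mod ?M1) \<and> [x = x2] (mod ?M2))" for x1 x2
  have cP: "[c x1 x2 = x1] (mod ?M1) \<and> [c x1 x2 = x2] (mod ?M2)" for x1 x2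
    unfolding c_def by (rule someI_ex[OF binary_chinese_remainder_nat[OF cM]])
  define G2 where "G2 x1 x2 = F.G (c x1 x2)" for x1 x2
  have Gc: "F.G t = F.G t'" if "[t = t'] (mod ?M1)" "[t = t'] (mod ?M2)" for t t'
  proof -
    have "[t = t'] (mod ?M1 * ?M2)" by (rule coprime_cong_mult_nat[OF that cM])
    thus ?thesis unfolding N[symmetric] by (rule F.G_cong)
  qed
  have Hc: "G2 x y = G2 x' y'" if "[x = x'] (mod ?M1)" "[y = y'] (mod ?M2)" for x x' y y'
  proof -
    have a1: "[c x y = c x' y'] (mod ?M1)"
      using cong_trans[OF cong_trans[OF conjunct1[OF cP] that(1)] cong_sym[OF conjunct1[OF cP]]] .
    have a2: "[c x y = c x' y'] (mod ?M2)"
      using cong_trans[OF cong_trans[OF conjunct2[OF cP] that(2)] cong_sym[OF conjunct2[OF cP]]] .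
    show ?thesis unfolding G2_def by (rule Gc[OF a1 a2])
  qed
  have Hp: "G2 (p^k*x) (p^k*y) = G2 x y" for k x y
  proof -
    have a1: "[c (p^k*x) (p^k*y) = p^k * c x y] (mod ?M1)"
      using cong_trans[OF conjunct1[OF cP] cong_scalar_left[OF cong_sym[OF conjunct1[OF cP]]]] .
    have a2: "[c (p^k*x) (p^k*y) = p^k * c x y] (mod ?M2)"
      using cong_trans[OF conjunct2[OF cP] cong_scalar_left[OF cong_sym[OF conjunct2[OF cP]]]] .
    have "G2 (p^k*x) (p^k*y) = F.G (p^k * c x y)" unfolding G2_def by (rule Gc[OF a1 a2])
    also have "\<dots> = G2 x y" unfolding G2_def by (rule F.G_frob_pow)
    finally show ?thesis .
  qed
  have TA: "twocomp p p1 m p2 n G2"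
    by (unfold_locales) (use assms(1,2,5,6,9,10) odd1 odd2 g2 Hp Hc in auto)
  have TB: "twocomp p p2 n p1 m (\<lambda>y x. G2 x y)"
  proof (unfold_locales)
    show "gcd (totient (p2 ^ n)) (totient (p1 ^ m)) dvd 2" using g2 by (simp add: gcd.commute)
    show "G2 (p^k*y) (p^k*x) = G2 y x" for k x y by (rule Hp)
    show "G2 y x = G2 y' x'" if "[x = x'] (mod ?M2)" "[y = y'] (mod ?M1)" for x x' y y'
      by (rule Hc[OF that(2) that(1)])
  qed (use assms(1,2,5,6,9,10) odd1 odd2 in auto)
  obtain V1 V2 V3 V4 V5 where V:
    "\<And>a. (\<Sum>i<?L1. \<Sum>j<?L2. G2 (a + ?M2*i) (a + ?M1*j)) \<in> {V1, V2, V3, V4, V5}"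
    using five_values[OF TA TB cq] by blast
  let ?I = "{..<?L1} \<times> {..<?L2}"
  define A where "A u = cyc_class \<gamma> N (?M2 * fst u + ?M1 * snd u)" for u
  have Deq: "D = \<Union>(A ` ?I)"
  proof (rule Set.set_eqI, rule iffI)
    fix x assume "x \<in> D"
    then obtain i j where ij: "i < ?L1" "j < ?L2" "x \<in> cyc_class \<gamma> N (?M2 * i + ?M1 * j)"
      unfolding assms(15) by blast
    have "(i, j) \<in> ?I" using ij by simp
    moreover have "x \<in> A (i, j)" unfolding A_def using ij by simp
    ultimately show "x \<in> \<Union>(A ` ?I)" by blast
  next
    fix x assume "x \<in> \<Union>(A ` ?I)"
    then obtain u where u: "u \<in> ?I" "x \<in> A u" by blast
    obtain i j where uij: "u = (i, j)" by (cases u)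
    have ij: "i < ?L1" "j < ?L2" "x \<in> cyc_class \<gamma> N (?M2 * i + ?M1 * j)"
      using u uij unfolding A_def by auto
    thus "x \<in> D" unfolding assms(15) by blast
  qed
  have L1M1: "?L1 \<le> ?M1" by (rule power_increasing) (use prime_gt_0_nat[OF assms(1)] in auto)
  have L2M2: "?L2 \<le> ?M2" by (rule power_increasing) (use prime_gt_0_nat[OF assms(2)] in auto)
  have cM21: "coprime ?M2 ?M1" using cM by (simp add: ac_simps)
  have disj: "A u \<inter> A v = {}" if u: "u \<in> ?I" and v: "v \<in> ?I" and uv: "u \<noteq> v" for u v
  proof -
    obtain i j where uij: "u = (i, j)" by (cases u)
    obtain i' j' where vij: "v = (i', j')" by (cases v)
    have ij: "i < ?L1" "j < ?L2" "i' < ?L1" "j' < ?L2" using u v uij vij by auto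
    have "\<not> [?M2 * i + ?M1 * j = ?M2 * i' + ?M1 * j'] (mod N)"
    proof
      assume cN: "[?M2 * i + ?M1 * j = ?M2 * i' + ?M1 * j'] (mod N)"
      have "[?M2 * i + ?M1 * j = ?M2 * i' + ?M1 * j'] (mod ?M1)"
        using cN unfolding N by (rule cong_modulus_mult_nat)
      hence "[?M2 * i = ?M2 * i'] (mod ?M1)" by (simp add: cong_def)
      hence "[i = i'] (mod ?M1)" using cM21 by (simp only: cong_mult_lcancel_nat)
      hence ii: "i = i'" using ij L1M1 by (simp add: cong_def)
      have "[?M2 * i + ?M1 * j = ?M2 * i' + ?M1 * j'] (mod ?M2)"
        using cN unfolding N mult.commute[of ?M1] by (rule cong_modulus_mult_nat)
      hence "[?M1 * j = ?M1 * j'] (mod ?M2)" by (simp add: cong_def)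
      hence "[j = j'] (mod ?M2)" using cM by (simp only: cong_mult_lcancel_nat)
      hence jj: "j = j'" using ij L2M2 by (simp add: cong_def)
      show False using uv uij vij ii jj by simp
    qed
    thus ?thesis unfolding A_def uij vij by (simp add: F.cyc_disj)
  qed
  have key: "(\<Sum>x\<in>D. can_add_char p f (\<gamma> ^ a * x)) = (\<Sum>i<?L1. \<Sum>j<?L2. G2 (a + ?M2*i) (a + ?M1*j))" for a
  proof -
    have "(\<Sum>x\<in>D. can_add_char p f (\<gamma> ^ a * x)) = (\<Sum>u\<in>?I. \<Sum>x\<in>A u. can_add_char p f (\<gamma> ^ a * x))"
      unfolding Deq by (rule sum.UNION_disjoint) (use disj in auto)
    also have "\<dots> = (\<Sum>u\<in>?I. F.G (a + (?M2 * fst u + ?M1 * snd u)))"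
      unfolding A_def by (simp only: F.G_shift)
    also have "\<dots> = (\<Sum>u\<in>?I. G2 (a + ?M2 * fst u) (a + ?M1 * snd u))"
    proof (rule sum.cong[OF refl])
      fix u
      have e1: "[a + (?M2 * fst u + ?M1 * snd u) = c (a + ?M2 * fst u) (a + ?M1 * snd u)] (mod ?M1)"
      proof -
        have "[a + (?M2 * fst u + ?M1 * snd u) = a + ?M2 * fst u] (mod ?M1)"
          by (simp add: cong_def add.assoc[symmetric])
        thus ?thesis using cong_sym[OF conjunct1[OF cP]] by (rule cong_trans)
      qed
      have e2: "[a + (?M2 * fst u + ?M1 * snd u) = c (a + ?M2 * fst u) (a + ?M1 * snd u)] (mod ?M2)"
      proof -
        have r: "a + (?M2 * fst u + ?M1 * snd u) = (a + ?M1 * snd u) + ?M2 * fst u" by simp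
        have "[a + (?M2 * fst u + ?M1 * snd u) = a + ?M1 * snd u] (mod ?M2)"
          unfolding r cong_def by (rule mod_mult_self2)
        thus ?thesis using cong_sym[OF conjunct2[OF cP]] by (rule cong_trans)
      qed
      show "F.G (a + (?M2 * fst u + ?M1 * snd u)) = G2 (a + ?M2 * fst u) (a + ?M1 * snd u)"
        unfolding G2_def by (rule Gc[OF e1 e2])
    qed
    also have "\<dots> = (\<Sum>i<?L1. \<Sum>j<?L2. G2 (a + ?M2*i) (a + ?M1*j))"
      by (simp add: sum.cartesian_product split_def)
    finally show ?thesis .
  qed
  have "(\<lambda>a. \<Sum>x\<in>D. can_add_char p f (\<gamma> ^ a * x)) ` {0..card (UNIV :: 'a set) - 2} \<subseteq> {V1, V2, V3, V4, V5}"
    using V key by auto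
  hence "card ((\<lambda>a. \<Sum>x\<in>D. can_add_char p f (\<gamma> ^ a * x)) ` {0..card (UNIV :: 'a set) - 2})
      \<le> card {V1, V2, V3, V4, V5}" by (rule card_mono[rotated]) simp
  also have "\<dots> \<le> 5" using card_length[of "[V1, V2, V3, V4, V5]"] by simp
  finally show ?thesis .
qed


end
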